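(* In the setting described in the context, for every $\gamma \in (0,\frac12)$ and every $\lambda_0 > 1$, \[\hat\Sigma = \bigcup_{0 \leq k \leq q} F_k \;\cup \bigcup_{0 \leq j < k \leq q} E_{j,k} \;\cup \bigcup_{0 \leq i < j < k \leq q} G_{i,j,k}.\]
   Context: $n\ge3$; $u_0,\dots,u_q$ are non-constant linear (affine) functions on $\mathbb{R}^n$ and $\Omega=\bigcap_{m=0}^q\{u_m\le 0\}$ is a compact convex polytope with non-empty interior. Fix a smooth even $\eta:\mathbb{R}\to\mathbb{R}$ with $\eta(t)=|t|$ for $|t|\ge\frac12$ and $\eta''\ge0$. For $\gamma\in(0,\frac12)$, $\lambda_0>1$ put $\lambda_k=\gamma^{-k}\lambda_0$ ($1\le k\le q$), $\hat u_0=u_0$, $\hat u_k=\frac12\big(\hat u_{k-1}+u_k+\lambda_k^{-1}\eta(\lambda_k(\hat u_{k-1}-u_k))\big)$, and $\hat\Sigma=\{\hat u_q=0\}$. Write $P_m=\{\hat u_{m-1}-u_m>\lambda_m^{-1}\}$, with empty intersections of such sets equal to $\mathbb{R}^n$. Define: $F_0=\hat\Sigma\cap\bigcap_{m=1}^q P_m$; for $1\le k\le q$, $F_k=\hat\Sigma\cap\bigcap_{m=k+1}^q P_m\cap\{\hat u_{k-1}-u_k<-\lambda_k^{-1}\}$. For $1\le k\le q$, $E_{0,k}=\hat\Sigma\cap\bigcap_{m=k+1}^q P_m\cap\bigcap_{m=1}^{k-1}P_m\cap\{-2\lambda_k^{-1}\le\hat u_{k-1}\le0\}\cap\{-2\lambda_k^{-1}\le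 u_k\le0\}\cap\{-2\lambda_k^{-1}\le u_0\le0\}$. For $1\le j<k\le q$, $E_{j,k}=\hat\Sigma\cap\bigcap_{m=k+1}^q P_m\cap\bigcap_{m=j+1}^{k-1}P_m\cap\{-2\lambda_k^{-1}\le\hat u_{k-1}\le0\}\cap\{-2\lambda_k^{-1}\le u_k\le0\}\cap\{-2\lambda_k^{-1}\le u_j\le0\}\cap\{\hat u_{j-1}-u_j<-\lambda_j^{-1}\}$. For $0\le i<j<k\le q$, $G_{i,j,k}=\hat\Sigma\cap\bigcap_{m=k+1}^q P_m\cap\bigcap_{m=j+1}^{k-1}P_m\cap\{-2\lambda_k^{-1}\le\hat u_{k-1}\le0\}\cap\{-2\lambda_k^{-1}\le u_k\le0\}\cap\{-4\lambda_j^{-1}\le u_j\le0\}\cap\{-6\lambda_i^{-1}\le u_i\le0\}$. *)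

theory Defs
  imports "HOL-Analysis.Analysis"
begin

definition smooth_real :: "(real \<Rightarrow> real) \<Rightarrow> bool" where
  "smooth_real f \<longleftrightarrow> (\<forall>k x. (deriv ^^ k) f differentiable (at x))"

definition lam :: "real \<Rightarrow> real \<Rightarrow> nat \<Rightarrow> real" where
  "lam \<gamma> lam0 k = lam0 / \<gamma> ^ k"

fun uhat :: "(real \<Rightarrow> real) \<Rightarrow> (nat \<Rightarrow> real) \<Rightarrow> (nat \<Rightarrow> 'a \<Rightarrow> real) \<Rightarrow> nat \<Rightarrow> 'a \<Rightarrow> real" where
  "uhat \<eta> L u 0 x = u 0 x"
| "uhat \<eta> L u (Suc k) x =
     (uhat \<eta> L u k x + u (Suc k) x
       + \<eta> (L (Suc k) * (uhat \<eta> L u k x - u (Suc k) x)) / L (Suc k)) / 2"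

definition hatSigma :: "(nat \<Rightarrow> 'a \<Rightarrow> real) \<Rightarrow> nat \<Rightarrow> 'a set" where
  "hatSigma uh q = {x. uh q x = 0}"

definition Pset :: "(nat \<Rightarrow> 'a \<Rightarrow> real) \<Rightarrow> (nat \<Rightarrow> 'a \<Rightarrow> real) \<Rightarrow> (nat \<Rightarrow> real) \<Rightarrow> nat \<Rightarrow> 'a set" where
  "Pset uh u L m = {x. uh (m - 1) x - u m x > 1 / L m}"

definition Fset :: "(nat \<Rightarrow> 'a \<Rightarrow> real) \<Rightarrow> (nat \<Rightarrow> 'a \<Rightarrow> real) \<Rightarrow> (nat \<Rightarrow> real) \<Rightarrow> nat \<Rightarrow> nat \<Rightarrow> 'a set" where
  "Fset uh u L q k =
    (if k = 0 then hatSigma uh q \<inter> (\<Inter>m\<in>{1..q}. Pset uh u L m)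
     else hatSigma uh q \<inter> (\<Inter>m\<in>{k+1..q}. Pset uh u L m)
          \<inter> {x. uh (k - 1) x - u k x < - 1 / L k})"

definition Eset :: "(nat \<Rightarrow> 'a \<Rightarrow> real) \<Rightarrow> (nat \<Rightarrow> 'a \<Rightarrow> real) \<Rightarrow> (nat \<Rightarrow> real) \<Rightarrow> nat \<Rightarrow> nat \<Rightarrow> nat \<Rightarrow> 'a set" where
  "Eset uh u L q j k =
    (if j = 0 then
       hatSigma uh q \<inter> (\<Inter>m\<in>{k+1..q}. Pset uh u L m) \<inter> (\<Inter>m\<in>{1..k-1}. Pset uh u L m)
       \<inter> {x. - 2 / L k \<le> uh (k - 1) x \<and> uh (k - 1) x \<le> 0}
       \<inter> {x. - 2 / L k \<le> u k x \<and> u k x \<le> 0}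
       \<inter> {x. - 2 / L k \<le> u 0 x \<and> u 0 x \<le> 0}
     else
       hatSigma uh q \<inter> (\<Inter>m\<in>{k+1..q}. Pset uh u L m) \<inter> (\<Inter>m\<in>{j+1..k-1}. Pset uh u L m)
       \<inter> {x. - 2 / L k \<le> uh (k - 1) x \<and> uh (k - 1) x \<le> 0}
       \<inter> {x. - 2 / L k \<le> u k x \<and> u k x \<le> 0}
       \<inter> {x. - 2 / L k \<le> u j x \<and> u j x \<le> 0}
       \<inter> {x. uh (j - 1) x - u j x < - 1 / L j})"

definition Gset :: "(nat \<Rightarrow> 'a \<Rightarrow> real) \<Rightarrow> (nat \<Rightarrow> 'a \<Rightarrow> real) \<Rightarrow> (nat \<Rightarrow> real) \<Rightarrow> nat \<Rightarrow> nat \<Rightarrow> nat \<Rightarrow> nat \<Rightarrow> 'a set" where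
  "Gset uh u L q i j k =
       hatSigma uh q \<inter> (\<Inter>m\<in>{k+1..q}. Pset uh u L m) \<inter> (\<Inter>m\<in>{j+1..k-1}. Pset uh u L m)
       \<inter> {x. - 2 / L k \<le> uh (k - 1) x \<and> uh (k - 1) x \<le> 0}
       \<inter> {x. - 2 / L k \<le> u k x \<and> u k x \<le> 0}
       \<inter> {x. - 4 / L j \<le> u j x \<and> u j x \<le> 0}
       \<inter> {x. - 6 / L i \<le> u i x \<and> u i x \<le> 0}"

end

theory Submission
  imports Defs
begin

lemma eta_convex_on:
  assumes "smooth_real \<eta>" "\<forall>t. (deriv ^^ 2) \<eta> t \<ge> 0"
  shows "convex_on UNIV \<eta>"
proof (rule f''_ge0_imp_convex[where f'="deriv \<eta>" and f''="deriv (deriv \<eta>)"])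
  fix x :: real
  have "(deriv ^^ 0) \<eta> differentiable (at x)" using assms(1) unfolding smooth_real_def by blast
  then show "DERIV \<eta> x :> deriv \<eta> x" by (simp add: DERIV_deriv_iff_real_differentiable)
  have "(deriv ^^ 1) \<eta> differentiable (at x)" using assms(1) unfolding smooth_real_def by blast
  then show "DERIV (deriv \<eta>) x :> deriv (deriv \<eta>) x" by (simp add: DERIV_deriv_iff_real_differentiable)
  show "deriv (deriv \<eta>) x \<ge> 0" using assms(2) by (simp add: numeral_2_eq_2)
qed auto

lemma eta_bounds:
  fixes \<eta> :: "real \<Rightarrow> real"
  assumes cv: "convex_on UNIV \<eta>" and ev: "\<forall>t. \<eta> (- t) = \<eta> t"
    and ab: "\<forall>t. \<bar>t\<bar> \<ge> 1/2 \<longrightarrow> \<eta> t = \<bar>t\<bar>"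
  shows "\<bar>s\<bar> \<le> \<eta> s" "\<eta> s \<le> max \<bar>s\<bar> (1/2)"
proof -
  have ge: "t \<le> \<eta> t" for t
  proof (cases "\<bar>t\<bar> \<ge> 1/2")
    case True then show ?thesis using ab by auto
  next
    case False
    define a where "a = 1 / (2 * (1 - t))"
    have a: "0 < a" "a < 1" using False by (auto simp: a_def field_simps)
    have c: "(1 - a) *\<^sub>R 1 + a *\<^sub>R t = 1/2"
    proof -
      have t1: "1 - t > 0" using False by auto
      have "a * (1 - t) = 1/2" using t1 by (simp add: a_def)
      then show ?thesis by (simp add: algebra_simps)
    qed
    have "\<eta> (1/2) \<le> (1 - a) * \<eta> 1 + a * \<eta> t"
      using convex_onD[OF cv, of a 1 t] a unfolding c by auto
    moreover have "\<eta> 1 = 1" "\<eta> (1/2) = 1/2" using ab by auto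
    ultimately have "1/2 \<le> (1 - a) + a * \<eta> t" by simp
    moreover have "1/2 = (1 - a) + a * t" using c by simp
    ultimately have "a * t \<le> a * \<eta> t" by linarith
    thus ?thesis using a by simp
  qed
  have "- s \<le> \<eta> s" using ge[of "-s"] ev by auto
  then show "\<bar>s\<bar> \<le> \<eta> s" using ge[of s] by auto
  show "\<eta> s \<le> max \<bar>s\<bar> (1/2)"
  proof (cases "\<bar>s\<bar> \<ge> 1/2")
    case True then show ?thesis using ab by auto
  next
    case False
    define a where "a = s + 1/2"
    have a: "0 \<le> a" "a \<le> 1" using False by (auto simp: a_def)
    have c: "(1 - a) *\<^sub>R (-1/2) + a *\<^sub>R (1/2) = s" by (simp add: a_def field_simps)
    have h: "\<eta> s \<le> (1 - a) * \<eta> (-1/2) + a * \<eta> (1/2)"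
      using convex_onD[OF cv, of a "-1/2" "1/2"] a unfolding c by auto
    have e1: "\<eta> (-1/2) = 1/2" and e2: "\<eta> (1/2) = 1/2" using ab by auto
    from h have "\<eta> s \<le> (1 - a) * (1/2) + a * (1/2)" unfolding e1 e2 .
    then have "\<eta> s \<le> 1/2" by (simp add: field_simps)
    thus ?thesis by simp
  qed
qed

definition hstep :: "(real \<Rightarrow> real) \<Rightarrow> real \<Rightarrow> real \<Rightarrow> real \<Rightarrow> real" where
  "hstep \<eta> Lk a b = (a + b + \<eta> (Lk * (a - b)) / Lk) / 2"

lemma absmul: "(Lk::real) > 0 \<Longrightarrow> \<bar>Lk * d\<bar> = Lk * \<bar>d\<bar>"
  by (simp add: abs_mult)

lemma hstep_ge:
  assumes "\<And>s. \<bar>s\<bar> \<le> \<eta> s" "Lk > 0"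
  shows "max a b \<le> hstep \<eta> Lk a b"
proof -
  define d where "d = a - b"
  have "Lk * \<bar>d\<bar> \<le> \<eta> (Lk * d)" using assms(1)[of "Lk * d"] absmul[OF assms(2)] by simp
  then have "Lk * \<bar>d\<bar> / Lk \<le> \<eta> (Lk * d) / Lk" using assms(2) by (rule divide_right_mono[OF _ less_imp_le])
  then have "\<bar>d\<bar> \<le> \<eta> (Lk * d) / Lk" using assms(2) by simp
  then show ?thesis unfolding hstep_def d_def by auto
qed

lemma hstep_le:
  assumes "\<And>s. \<eta> s \<le> max \<bar>s\<bar> (1/2)" "Lk > 0"
  shows "hstep \<eta> Lk a b \<le> max a b + 1 / Lk / 4"
proof -
  define d where "d = a - b"
  have nn: "0 \<le> Lk * \<bar>d\<bar>" using assms(2) by simp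
  have "\<eta> (Lk * d) \<le> max (Lk * \<bar>d\<bar>) (1/2)" using assms(1)[of "Lk * d"] absmul[OF assms(2), of d] by simp
  moreover have "max y (1/2) \<le> y + 1/2" if "0 \<le> y" for y :: real using that by linarith
  ultimately have "\<eta> (Lk * d) \<le> Lk * \<bar>d\<bar> + 1/2" using nn order_trans by blast
  then have "\<eta> (Lk * d) / Lk \<le> (Lk * \<bar>d\<bar> + 1/2) / Lk" using assms(2) by (rule divide_right_mono[OF _ less_imp_le])
  also have "\<dots> = \<bar>d\<bar> + 1 / Lk / 2" using assms(2) by (simp add: add_divide_distrib)
  finally show ?thesis unfolding hstep_def d_def by auto
qed

lemma hstep_eq:
  assumes "\<forall>t. \<bar>t\<bar> \<ge> 1/2 \<longrightarrow> \<eta> t = \<bar>t\<bar>" "Lk > 0" "\<bar>a - b\<bar> \<ge> 1 / Lk / 2"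
  shows "hstep \<eta> Lk a b = max a b"
proof -
  define d where "d = a - b"
  have "1 / (Lk * 2) \<le> \<bar>d\<bar>" using assms(3) by (simp add: d_def)
  then have "1 \<le> \<bar>d\<bar> * (Lk * 2)" using pos_divide_le_eq[of "Lk*2" 1 "\<bar>d\<bar>"] assms(2) by simp
  then have "1/2 \<le> Lk * \<bar>d\<bar>" by (simp add: algebra_simps)
  then have "\<eta> (Lk * d) = Lk * \<bar>d\<bar>" using assms(1) absmul[OF assms(2), of d] by auto
  then have "\<eta> (Lk * d) / Lk = \<bar>d\<bar>" using assms(2) by simp
  then show ?thesis unfolding hstep_def d_def by auto
qed

lemma F_sub: "Fset uh u L q k \<subseteq> hatSigma uh q"
  by (auto simp: Fset_def split: if_split_asm)
lemma E_sub: "Eset uh u L q j k \<subseteq> hatSigma uh q"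
  by (auto simp: Eset_def split: if_split_asm)
lemma G_sub: "Gset uh u L q i j k \<subseteq> hatSigma uh q"
  unfolding Gset_def by blast

lemma F0I: "x \<in> hatSigma uh q \<Longrightarrow> \<forall>m\<in>{1..q}. x \<in> Pset uh u L m \<Longrightarrow> x \<in> Fset uh u L q 0"
  unfolding Fset_def by simp
lemma FkI: "k \<noteq> 0 \<Longrightarrow> x \<in> hatSigma uh q \<Longrightarrow> \<forall>m\<in>{k+1..q}. x \<in> Pset uh u L m
  \<Longrightarrow> uh (k - 1) x - u k x < - 1 / L k \<Longrightarrow> x \<in> Fset uh u L q k"
  unfolding Fset_def by simp
lemma E0I: "x \<in> hatSigma uh q \<Longrightarrow> \<forall>m\<in>{k+1..q}. x \<in> Pset uh u L m
  \<Longrightarrow> \<forall>m\<in>{1..k-1}. x \<in> Pset uh u L m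
  \<Longrightarrow> - 2 / L k \<le> uh (k - 1) x \<Longrightarrow> uh (k - 1) x \<le> 0
  \<Longrightarrow> - 2 / L k \<le> u k x \<Longrightarrow> u k x \<le> 0
  \<Longrightarrow> - 2 / L k \<le> u 0 x \<Longrightarrow> u 0 x \<le> 0 \<Longrightarrow> x \<in> Eset uh u L q 0 k"
  unfolding Eset_def by simp
lemma EjI: "j \<noteq> 0 \<Longrightarrow> x \<in> hatSigma uh q \<Longrightarrow> \<forall>m\<in>{k+1..q}. x \<in> Pset uh u L m
  \<Longrightarrow> \<forall>m\<in>{j+1..k-1}. x \<in> Pset uh u L m
  \<Longrightarrow> - 2 / L k \<le> uh (k - 1) x \<Longrightarrow> uh (k - 1) x \<le> 0
  \<Longrightarrow> - 2 / L k \<le> u k x \<Longrightarrow> u k x \<le> 0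
  \<Longrightarrow> - 2 / L k \<le> u j x \<Longrightarrow> u j x \<le> 0
  \<Longrightarrow> uh (j - 1) x - u j x < - 1 / L j \<Longrightarrow> x \<in> Eset uh u L q j k"
  unfolding Eset_def by simp
lemma GI: "x \<in> hatSigma uh q \<Longrightarrow> \<forall>m\<in>{k+1..q}. x \<in> Pset uh u L m
  \<Longrightarrow> \<forall>m\<in>{j+1..k-1}. x \<in> Pset uh u L m
  \<Longrightarrow> - 2 / L k \<le> uh (k - 1) x \<Longrightarrow> uh (k - 1) x \<le> 0
  \<Longrightarrow> - 2 / L k \<le> u k x \<Longrightarrow> u k x \<le> 0
  \<Longrightarrow> - 4 / L j \<le> u j x \<Longrightarrow> u j x \<le> 0
  \<Longrightarrow> - 6 / L i \<le> u i x \<Longrightarrow> u i x \<le> 0 \<Longrightarrow> x \<in> Gset uh u L q i j k"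
  unfolding Gset_def by simp

lemma ball_ext: "x \<in> P (Suc j) \<Longrightarrow> \<forall>m\<in>{Suc j + 1..K}. x \<in> P m \<Longrightarrow> \<forall>m\<in>{j + 1..K}. x \<in> P m"
proof
  fix m assume a: "x \<in> P (Suc j)" "\<forall>m\<in>{Suc j + 1..K}. x \<in> P m" and m: "m \<in> {j + 1..K}"
  show "x \<in> P m"
  proof (cases "m = Suc j")
    case True then show ?thesis using a by simp
  next
    case False then have "m \<in> {Suc j + 1..K}" using m by auto
    then show ?thesis using a by blast
  qed
qed

lemma memF: "x \<in> F k \<Longrightarrow> k \<in> {0..q} \<Longrightarrow> x \<in> (\<Union>k\<in>{0..q}. F k) \<union> A \<union> B"
  by blast
lemma memE: "x \<in> E j k \<Longrightarrow> k \<in> {0..q} \<Longrightarrow> j \<in> {0..<k}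
  \<Longrightarrow> x \<in> A \<union> (\<Union>k\<in>{0..q}. \<Union>j\<in>{0..<k}. E j k) \<union> B"
  by blast
lemma memG: "x \<in> G i j k \<Longrightarrow> k \<in> {0..q} \<Longrightarrow> j \<in> {0..<k} \<Longrightarrow> i \<in> {0..<j}
  \<Longrightarrow> x \<in> A \<union> B \<union> (\<Union>k\<in>{0..q}. \<Union>j\<in>{0..<k}. \<Union>i\<in>{0..<j}. G i j k)"
  by blast

theorem proposition2p17:
  fixes u :: "nat \<Rightarrow> real ^ 'n \<Rightarrow> real" and q :: nat
    and \<eta> :: "real \<Rightarrow> real" and \<gamma> lam0 :: real
  assumes dim: "CARD('n) \<ge> 3"
    and affine_u: "\<forall>m\<le>q. \<exists>a b. a \<noteq> 0 \<and> u m = (\<lambda>x. a \<bullet> x + b)"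
    and Omega_compact: "compact {x. \<forall>m\<le>q. u m x \<le> 0}"
    and Omega_interior: "interior {x. \<forall>m\<le>q. u m x \<le> 0} \<noteq> {}"
    and eta_smooth: "smooth_real \<eta>"
    and eta_even: "\<forall>t. \<eta> (- t) = \<eta> t"
    and eta_abs: "\<forall>t. \<bar>t\<bar> \<ge> 1/2 \<longrightarrow> \<eta> t = \<bar>t\<bar>"
    and eta_convex: "\<forall>t. (deriv ^^ 2) \<eta> t \<ge> 0"
    and gamma: "0 < \<gamma>" "\<gamma> < 1/2"
    and lambda0: "lam0 > 1"
  shows "hatSigma (uhat \<eta> (lam \<gamma> lam0) u) q =
           (\<Union>k\<in>{0..q}. Fset (uhat \<eta> (lam \<gamma> lam0) u) u (lam \<gamma> lam0) q k)
         \<union> (\<Union>k\<in>{0..q}. \<Union>j\<in>{0..<k}. Eset (uhat \<eta> (lam \<gamma> lam0) u) u (lam \<gamma> lam0) q j k)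
         \<union> (\<Union>k\<in>{0..q}. \<Union>j\<in>{0..<k}. \<Union>i\<in>{0..<j}.
               Gset (uhat \<eta> (lam \<gamma> lam0) u) u (lam \<gamma> lam0) q i j k)" (is "_ = ?R")

proof -
  define L where "L = lam \<gamma> lam0"
  define U where "U = uhat \<eta> L u"
  define e where "e m = 1 / L m" for m
  have cv: "convex_on UNIV \<eta>" using eta_convex_on[OF eta_smooth eta_convex] .
  have eb1: "\<And>s. \<bar>s\<bar> \<le> \<eta> s" using eta_bounds(1)[OF cv eta_even eta_abs] .
  have eb2: "\<And>s. \<eta> s \<le> max \<bar>s\<bar> (1/2)" using eta_bounds(2)[OF cv eta_even eta_abs] .
  have Lpos: "L m > 0" for m using gamma lambda0 by (simp add: L_def lam_def)
  have epos: "e m > 0" for m using Lpos by (simp add: e_def)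
  have esuc: "e (Suc m) = \<gamma> * e m" for m using gamma lambda0
    by (simp add: e_def L_def lam_def)
  have esuc2: "e (Suc m) < e m / 2" for m
    using esuc[of m] epos[of m] gamma by (simp add: mult_strict_right_mono)
  have emono: "j \<le> k \<Longrightarrow> e k \<le> e j" for j k
  proof (induction k)
    case 0 then show ?case by simp
  next
    case (Suc k)
    show ?case
    proof (cases "j = Suc k")
      case False then show ?thesis using Suc esuc2[of k] epos[of "Suc k"] by auto
    qed simp
  qed
  have cL: "c / L m = c * e m" for c m by (simp add: e_def)
  have Usuc: "U (Suc k) x = hstep \<eta> (L (Suc k)) (U k x) (u (Suc k) x)" for k x
    by (simp add: U_def hstep_def)
  have US1: "max (U k x) (u (Suc k) x) \<le> U (Suc k) x" for k x
    unfolding Usuc by (rule hstep_ge[OF eb1 Lpos])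
  have US2: "U (Suc k) x \<le> max (U k x) (u (Suc k) x) + e (Suc k) / 4" for k x
    unfolding Usuc e_def by (rule hstep_le[OF eb2 Lpos])
  have US3: "\<bar>U k x - u (Suc k) x\<bar> \<ge> e (Suc k) / 2 \<Longrightarrow> U (Suc k) x = max (U k x) (u (Suc k) x)" for k x
    unfolding Usuc e_def by (rule hstep_eq[OF eta_abs Lpos])
  have U0: "U 0 x = u 0 x" for x by (simp add: U_def)
  have Umono: "i \<le> m \<Longrightarrow> U i x \<le> U m x" for i m x
  proof (induction m)
    case 0 then show ?case by simp
  next
    case (Suc m)
    show ?case
    proof (cases "i = Suc m")
      case False then show ?thesis using Suc US1[of m x] by auto
    qed simp
  qed
  have Uge: "i \<le> m \<Longrightarrow> u i x \<le> U m x" for i m x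
  proof (cases i)
    case 0 then show ?thesis using Umono[of 0 m x] U0 by simp
  next
    case (Suc i')
    assume "i \<le> m"
    then show ?thesis using Umono[of i m x] US1[of i' x] Suc by auto
  qed
  have Pmem: "x \<in> Pset U u L (Suc k) \<longleftrightarrow> U k x - u (Suc k) x > e (Suc k)" for x k
    by (simp add: Pset_def e_def)
  have lemC: "-2 * e m \<le> U m x \<Longrightarrow> \<exists>i\<le>m. -3 * e i \<le> u i x" for m x
  proof (induction m)
    case 0 then show ?case using U0[of x] epos[of 0] by auto
  next
    case (Suc m)
    show ?case
    proof (cases "-3 * e (Suc m) \<le> u (Suc m) x")
      case True then show ?thesis by blast
    next
      case False
      then have "-2 * e m \<le> U m x"
        using Suc.prems US2[of m x] esuc2[of m] epos[of "Suc m"] by auto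
      then show ?thesis using Suc.IH le_SucI by blast
    qed
  qed
  show ?thesis
  proof
    show "?R \<subseteq> hatSigma (uhat \<eta> (lam \<gamma> lam0) u) q"
      by (intro Un_least UN_least) (simp_all only: F_sub E_sub G_sub)
  next
    show "hatSigma (uhat \<eta> (lam \<gamma> lam0) u) q \<subseteq> ?R"
    proof
      fix x assume xS: "x \<in> hatSigma (uhat \<eta> (lam \<gamma> lam0) u) q"
      then have xS': "x \<in> hatSigma U q" by (simp add: U_def L_def)
      have Uq: "U q x = 0" using xS' by (simp add: hatSigma_def)
      let ?RR = "(\<Union>k\<in>{0..q}. Fset U u L q k)
         \<union> (\<Union>k\<in>{0..q}. \<Union>j\<in>{0..<k}. Eset U u L q j k)
         \<union> (\<Union>k\<in>{0..q}. \<Union>j\<in>{0..<k}. \<Union>i\<in>{0..<j}. Gset U u L q i j k)"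
      have lemB: "x \<in> ?RR"
        if K: "1 \<le> K" "K \<le> q" and PK: "\<forall>m\<in>{K+1..q}. x \<in> Pset U u L m"
          and R1: "-2 * e K \<le> U (K-1) x" "U (K-1) x \<le> 0"
          and R2: "-2 * e K \<le> u K x" "u K x \<le> 0"
          and j: "j < K" "-2 * e K \<le> U j x" "U j x \<le> 0"
          and Pj: "\<forall>m\<in>{j+1..K-1}. x \<in> Pset U u L m"
        for K j
        using j Pj
      proof (induction j)
        case 0
        have "x \<in> Eset U u L q 0 K"
          by (rule E0I) (use xS' PK R1 R2 0 U0[of x] in \<open>simp_all add: cL\<close>)
        then show ?case by (rule memE[where E="Eset U u L q"]) (use K in auto)
      next
        case (Suc j)
        show ?case
        proof (cases "x \<in> Pset U u L (Suc j)")
          case True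
          then have "U j x = U (Suc j) x" using US3[of j x] Pmem epos[of "Suc j"] by auto
          moreover have "\<forall>m\<in>{j+1..K-1}. x \<in> Pset U u L m"
            by (rule ball_ext[where P="Pset U u L", OF True Suc.prems(4)])
          ultimately show ?thesis by (intro Suc.IH) (use Suc.prems in auto)
        next
          case notP: False
          show ?thesis
          proof (cases "U j x - u (Suc j) x < - e (Suc j)")
            case True
            then have "U (Suc j) x = u (Suc j) x" using US3[of j x] epos[of "Suc j"] by auto
            then have "x \<in> Eset U u L q (Suc j) K"
              by (intro EjI) (use xS' PK R1 R2 Suc.prems True in \<open>simp_all add: cL\<close>)
            then show ?thesis by (rule memE[where E="Eset U u L q"]) (use K Suc.prems(1) in auto)
          next
            case False
            have ejK: "e K \<le> e (Suc j)" using emono Suc.prems(1) by auto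
            have d: "\<bar>U j x - u (Suc j) x\<bar> \<le> e (Suc j)" using notP False Pmem by auto
            have m1: "-2 * e (Suc j) - e (Suc j) / 4 \<le> max (U j x) (u (Suc j) x)"
              using US2[of j x] Suc.prems(2) ejK by auto
            have uj: "-4 * e (Suc j) \<le> u (Suc j) x" "u (Suc j) x \<le> 0"
              using m1 d epos[of "Suc j"] US1[of j x] Suc.prems(3) by auto
            have Uj: "-2 * e j \<le> U j x"
              using m1 d esuc2[of j] epos[of "Suc j"] by auto
            obtain i where i: "i \<le> j" "-3 * e i \<le> u i x" using lemC[OF Uj] by blast
            have ui: "-6 * e i \<le> u i x" "u i x \<le> 0"
              using i epos[of i] Uge[of i j x] US1[of j x] Suc.prems(3) by auto
            have "x \<in> Gset U u L q i (Suc j) K"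
              by (rule GI) (use xS' PK R1 R2 Suc.prems uj ui in \<open>simp_all add: cL\<close>)
            then show ?thesis by (rule memG[where G="Gset U u L q"]) (use K Suc.prems(1) i(1) in auto)
          qed
        qed
      qed
      have lemA: "k \<le> q \<Longrightarrow> U k x = 0 \<Longrightarrow> \<forall>m\<in>{k+1..q}. x \<in> Pset U u L m \<Longrightarrow> x \<in> ?RR" for k
      proof (induction k)
        case 0
        have "x \<in> Fset U u L q 0" by (rule F0I) (use xS' 0 in simp_all)
        then show ?case by (rule memF[where F="Fset U u L q"]) auto
      next
        case (Suc k)
        show ?case
        proof (cases "x \<in> Pset U u L (Suc k)")
          case True
          then have "U k x = U (Suc k) x" using US3[of k x] Pmem epos[of "Suc k"] by auto
          moreover have "\<forall>m\<in>{k+1..q}. x \<in> Pset U u L m"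
            by (rule ball_ext[where P="Pset U u L", OF True Suc.prems(3)])
          ultimately show ?thesis by (intro Suc.IH) (use Suc.prems in auto)
        next
          case notP: False
          show ?thesis
          proof (cases "U k x - u (Suc k) x < - e (Suc k)")
            case True
            have "x \<in> Fset U u L q (Suc k)"
              by (rule FkI) (use xS' Suc.prems True in \<open>simp_all add: cL\<close>)
            then show ?thesis by (rule memF[where F="Fset U u L q"]) (use Suc.prems(1) in auto)
          next
            case False
            have d: "\<bar>U k x - u (Suc k) x\<bar> \<le> e (Suc k)" using notP False Pmem by auto
            have m1: "- e (Suc k) / 4 \<le> max (U k x) (u (Suc k) x)"
              using US2[of k x] Suc.prems(2) by auto
            have m2: "max (U k x) (u (Suc k) x) \<le> 0" using US1[of k x] Suc.prems(2) by auto
            show ?thesis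
              apply (rule lemB[of "Suc k" k])
              using Suc.prems m1 m2 d epos[of "Suc k"] by auto
          qed
        qed
      qed
      have "x \<in> ?RR" using lemA[of q] Uq by auto
      then show "x \<in> ?R" by (simp add: U_def L_def)
    qed
  qed
qed

end
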